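(* Let $G$ be a looped simple graph. (a) No element of $M[IAS(G)]$ is a coloop. (b) Two distinct elements of $M[IAS(G)]$ are in series if and only if they are the two non-loop elements of the vertex triple $\tau_G(v)$ of an isolated vertex $v$ of $G$ (and in that case they are also parallel).
   Context: A looped simple graph is a finite graph in which each vertex carries at most one loop and no two distinct vertices are joined by more than one edge; "neighbors" are distinct vertices joined by a non-loop edge, and a vertex is isolated if it has no neighbors (it may be looped). $A(G)$ is the $V(G)\times V(G)$ matrix over $GF(2)$ with diagonal entry $1$ exactly at looped vertices and off-diagonal entry $1$ exactly for adjacent pairs. $IAS(G)=(I\mid A(G)\mid A(G)+I)$ over $GF(2)$, rows indexed by $V(G)$; the $v$-columns of the three blocks are labelled $\phi_G(v),\chi_G(v),\psi_G(v)$. $M[IAS(G)]$ is the binary column matroid of $IAS(G)$ on $W(G)=\{\phi_G(v),\chi_G(v),\psi_G(v):v\in V(G)\}$, and $\tau_G(v)=\{\phi_G(v),\chi_G(v),\psi_G(v)\}$. A loop is an element in no basis; a coloop is an element in every basis. Two non-loop elements are parallel if they form a $2$-element circuit. Two non-coloop elements are in series if no basis excludes both of them (coloops are all considered in series with one another). *)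

theory Defs
  imports Main "HOL-Library.Z2"
begin

text \<open>A looped simple graph: finite vertex set V, symmetric irreflexive adjacency E
  (non-loop edges, only between vertices of V), and a predicate L marking looped vertices.\<close>

definition looped_simple_graph :: "'a set \<Rightarrow> ('a \<Rightarrow> 'a \<Rightarrow> bool) \<Rightarrow> bool" where
  "looped_simple_graph V E \<longleftrightarrow> finite V \<and> (\<forall>v w. E v w \<longrightarrow> E w v)
     \<and> (\<forall>v. \<not> E v v) \<and> (\<forall>v w. E v w \<longrightarrow> v \<in> V \<and> w \<in> V)"

definition isolated :: "'a set \<Rightarrow> ('a \<Rightarrow> 'a \<Rightarrow> bool) \<Rightarrow> 'a \<Rightarrow> bool" where
  "isolated V E v \<longleftrightarrow> v \<in> V \<and> \<not> (\<exists>w\<in>V. w \<noteq> v \<and> E v w)"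

definition adjm :: "('a \<Rightarrow> 'a \<Rightarrow> bool) \<Rightarrow> ('a \<Rightarrow> bool) \<Rightarrow> 'a \<Rightarrow> 'a \<Rightarrow> bit" where
  "adjm E L u v = (if u = v then (if L v then 1 else 0) else (if E u v then 1 else 0))"

datatype blk = Phi | Chi | Psi

text \<open>Elements of W(G): (v,Phi) = phi_G(v), (v,Chi) = chi_G(v), (v,Psi) = psi_G(v).\<close>
definition W :: "'a set \<Rightarrow> ('a \<times> blk) set" where
  "W V = V \<times> UNIV"

definition tau :: "'a \<Rightarrow> ('a \<times> blk) set" where
  "tau v = {(v, Phi), (v, Chi), (v, Psi)}"

text \<open>Column of IAS(G) = (I | A | A+I) labelled by an element; entry in row u.\<close>
fun iascol :: "('a \<Rightarrow> 'a \<Rightarrow> bool) \<Rightarrow> ('a \<Rightarrow> bool) \<Rightarrow> 'a \<times> blk \<Rightarrow> 'a \<Rightarrow> bit" where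
  "iascol E L (v, Phi) u = (if u = v then 1 else 0)"
| "iascol E L (v, Chi) u = adjm E L u v"
| "iascol E L (v, Psi) u = adjm E L u v + (if u = v then 1 else 0)"

definition ias_indep :: "'a set \<Rightarrow> ('a \<Rightarrow> 'a \<Rightarrow> bool) \<Rightarrow> ('a \<Rightarrow> bool) \<Rightarrow> ('a \<times> blk) set \<Rightarrow> bool" where
  "ias_indep V E L S \<longleftrightarrow> S \<subseteq> W V \<and>
     (\<forall>c :: 'a \<times> blk \<Rightarrow> bit. (\<forall>u\<in>V. (\<Sum>x\<in>S. c x * iascol E L x u) = 0) \<longrightarrow> (\<forall>x\<in>S. c x = 0))"

definition ias_basis :: "'a set \<Rightarrow> ('a \<Rightarrow> 'a \<Rightarrow> bool) \<Rightarrow> ('a \<Rightarrow> bool) \<Rightarrow> ('a \<times> blk) set \<Rightarrow> bool" where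
  "ias_basis V E L B \<longleftrightarrow> ias_indep V E L B \<and>
     (\<forall>S. B \<subset> S \<longrightarrow> S \<subseteq> W V \<longrightarrow> \<not> ias_indep V E L S)"

definition ias_circuit :: "'a set \<Rightarrow> ('a \<Rightarrow> 'a \<Rightarrow> bool) \<Rightarrow> ('a \<Rightarrow> bool) \<Rightarrow> ('a \<times> blk) set \<Rightarrow> bool" where
  "ias_circuit V E L C \<longleftrightarrow> C \<subseteq> W V \<and> \<not> ias_indep V E L C \<and>
     (\<forall>D. D \<subset> C \<longrightarrow> ias_indep V E L D)"

definition ias_loop :: "'a set \<Rightarrow> ('a \<Rightarrow> 'a \<Rightarrow> bool) \<Rightarrow> ('a \<Rightarrow> bool) \<Rightarrow> 'a \<times> blk \<Rightarrow> bool" where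
  "ias_loop V E L x \<longleftrightarrow> x \<in> W V \<and> (\<forall>B. ias_basis V E L B \<longrightarrow> x \<notin> B)"

definition ias_coloop :: "'a set \<Rightarrow> ('a \<Rightarrow> 'a \<Rightarrow> bool) \<Rightarrow> ('a \<Rightarrow> bool) \<Rightarrow> 'a \<times> blk \<Rightarrow> bool" where
  "ias_coloop V E L x \<longleftrightarrow> x \<in> W V \<and> (\<forall>B. ias_basis V E L B \<longrightarrow> x \<in> B)"

definition ias_parallel :: "'a set \<Rightarrow> ('a \<Rightarrow> 'a \<Rightarrow> bool) \<Rightarrow> ('a \<Rightarrow> bool) \<Rightarrow> 'a \<times> blk \<Rightarrow> 'a \<times> blk \<Rightarrow> bool" where
  "ias_parallel V E L x y \<longleftrightarrow> \<not> ias_loop V E L x \<and> \<not> ias_loop V E L y \<and>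
     x \<noteq> y \<and> ias_circuit V E L {x, y}"

definition ias_series :: "'a set \<Rightarrow> ('a \<Rightarrow> 'a \<Rightarrow> bool) \<Rightarrow> ('a \<Rightarrow> bool) \<Rightarrow> 'a \<times> blk \<Rightarrow> 'a \<times> blk \<Rightarrow> bool" where
  "ias_series V E L x y \<longleftrightarrow> x \<in> W V \<and> y \<in> W V \<and>
     ((ias_coloop V E L x \<and> ias_coloop V E L y) \<or>
      (\<not> ias_coloop V E L x \<and> \<not> ias_coloop V E L y \<and>
       \<not> (\<exists>B. ias_basis V E L B \<and> x \<notin> B \<and> y \<notin> B)))"

end

theory Submission
  imports Defs
begin


declare add_bit_eq_xor[simp del] mult_bit_eq_and[simp del]

lemma bit_add_self[simp]: "(a::bit) + a = 0"
  by (cases a) (simp_all add: add_bit_eq_xor)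

lemma bit_add_cancel: "(a::bit) + b = 0 \<longleftrightarrow> a = b"
  by (cases a; cases b) (simp_all add: add_bit_eq_xor)

lemma UNIV_blk: "(UNIV :: blk set) = {Phi, Chi, Psi}"
  using blk.exhaust by auto

lemma finite_W: "finite V \<Longrightarrow> finite (W V)"
  unfolding W_def by (simp add: UNIV_blk)

definition inspan :: "'a set \<Rightarrow> ('a \<Rightarrow> 'a \<Rightarrow> bool) \<Rightarrow> ('a \<Rightarrow> bool) \<Rightarrow> ('a \<times> blk) set \<Rightarrow> ('a \<Rightarrow> bit) \<Rightarrow> bool" where
  "inspan V E L B f \<longleftrightarrow> (\<exists>c. \<forall>u\<in>V. f u = (\<Sum>x\<in>B. c x * iascol E L x u))"

lemma inspan_mono:
  assumes "inspan V E L B f" "B \<subseteq> B'" "finite B'"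
  shows "inspan V E L B' f"
proof -
  obtain c where c: "\<forall>u\<in>V. f u = (\<Sum>x\<in>B. c x * iascol E L x u)"
    using assms(1) unfolding inspan_def by blast
  define d where "d x = (if x \<in> B then c x else 0)" for x
  have "\<forall>u\<in>V. f u = (\<Sum>x\<in>B'. d x * iascol E L x u)"
  proof
    fix u assume "u \<in> V"
    have "(\<Sum>x\<in>B'. d x * iascol E L x u) = (\<Sum>x\<in>B. d x * iascol E L x u)"
      by (rule sum.mono_neutral_right[OF assms(3) assms(2)]) (auto simp: d_def)
    also have "\<dots> = (\<Sum>x\<in>B. c x * iascol E L x u)"
      by (rule sum.cong) (auto simp: d_def)
    finally show "f u = (\<Sum>x\<in>B'. d x * iascol E L x u)" using c \<open>u \<in> V\<close> by simp
  qed
  then show ?thesis unfolding inspan_def by blast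
qed

lemma inspan_mem:
  assumes "z \<in> B" "finite B"
  shows "inspan V E L B (iascol E L z)"
proof -
  have "\<forall>u\<in>V. iascol E L z u = (\<Sum>x\<in>B. (if x = z then 1 else 0) * iascol E L x u)"
  proof
    fix u
    have "(\<Sum>x\<in>B. (if x = z then 1 else 0) * iascol E L x u) = (\<Sum>x\<in>B. if x = z then iascol E L z u else 0)"
      by (rule sum.cong) auto
    then show "iascol E L z u = (\<Sum>x\<in>B. (if x = z then 1 else 0) * iascol E L x u)"
      using assms by (simp add: sum.delta)
  qed
  then show ?thesis unfolding inspan_def by (rule exI[where x="\<lambda>x. if x = z then 1 else 0"])
qed

lemma inspan_trans:
  assumes "\<forall>t\<in>T. inspan V E L B (iascol E L t)" "inspan V E L T f" "finite T" "finite B"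
  shows "inspan V E L B f"
proof -
  obtain d where d: "\<forall>u\<in>V. f u = (\<Sum>t\<in>T. d t * iascol E L t u)"
    using assms(2) unfolding inspan_def by blast
  have "\<forall>t\<in>T. \<exists>c. \<forall>u\<in>V. iascol E L t u = (\<Sum>x\<in>B. c x * iascol E L x u)"
    using assms(1) unfolding inspan_def by blast
  then obtain C where C: "\<forall>t\<in>T. \<forall>u\<in>V. iascol E L t u = (\<Sum>x\<in>B. C t x * iascol E L x u)"
    by metis
  have "\<forall>u\<in>V. f u = (\<Sum>x\<in>B. (\<Sum>t\<in>T. d t * C t x) * iascol E L x u)"
  proof
    fix u assume u: "u \<in> V"
    have "f u = (\<Sum>t\<in>T. d t * (\<Sum>x\<in>B. C t x * iascol E L x u))"
      using d C u by simp
    also have "\<dots> = (\<Sum>t\<in>T. \<Sum>x\<in>B. d t * C t x * iascol E L x u)"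
      by (simp add: sum_distrib_left mult.assoc)
    also have "\<dots> = (\<Sum>x\<in>B. \<Sum>t\<in>T. d t * C t x * iascol E L x u)"
      by (rule sum.swap)
    also have "\<dots> = (\<Sum>x\<in>B. (\<Sum>t\<in>T. d t * C t x) * iascol E L x u)"
      by (simp add: sum_distrib_right)
    finally show "f u = (\<Sum>x\<in>B. (\<Sum>t\<in>T. d t * C t x) * iascol E L x u)" .
  qed
  then show ?thesis unfolding inspan_def by (rule exI[where x="\<lambda>x. \<Sum>t\<in>T. d t * C t x"])
qed

lemma indep_insert:
  assumes "ias_indep V E L B" "z \<in> W V" "\<not> inspan V E L B (iascol E L z)" "finite B" "z \<notin> B"
  shows "ias_indep V E L (insert z B)"
  unfolding ias_indep_def
proof (intro conjI allI impI)
  show "insert z B \<subseteq> W V" using assms(1,2) unfolding ias_indep_def by auto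
  fix c :: "'a \<times> blk \<Rightarrow> bit"
  assume h: "\<forall>u\<in>V. (\<Sum>x\<in>insert z B. c x * iascol E L x u) = 0"
  have h2: "\<forall>u\<in>V. c z * iascol E L z u + (\<Sum>x\<in>B. c x * iascol E L x u) = 0"
    using h assms(4,5) by simp
  have cz: "c z = 0"
  proof (rule ccontr)
    assume "c z \<noteq> 0"
    then have "c z = 1" by simp
    then have "\<forall>u\<in>V. iascol E L z u = (\<Sum>x\<in>B. c x * iascol E L x u)"
      using h2 by (simp add: bit_add_cancel)
    then show False using assms(3) unfolding inspan_def by blast
  qed
  then have "\<forall>u\<in>V. (\<Sum>x\<in>B. c x * iascol E L x u) = 0" using h2 by simp
  then have "\<forall>x\<in>B. c x = 0" using assms(1) unfolding ias_indep_def by blast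
  then show "\<forall>x\<in>insert z B. c x = 0" using cz by simp
qed

lemma not_indep_span:
  assumes "z \<in> S" "B \<subseteq> S" "z \<notin> B" "inspan V E L B (iascol E L z)" "finite S"
  shows "\<not> ias_indep V E L S"
proof
  assume ind: "ias_indep V E L S"
  obtain c where c: "\<forall>u\<in>V. iascol E L z u = (\<Sum>x\<in>B. c x * iascol E L x u)"
    using assms(4) unfolding inspan_def by blast
  define d where "d x = (if x = z then 1 else if x \<in> B then c x else 0)" for x
  have fB: "finite B" using assms(2,5) finite_subset by blast
  have "\<forall>u\<in>V. (\<Sum>x\<in>S. d x * iascol E L x u) = 0"
  proof
    fix u assume u: "u \<in> V"
    have "(\<Sum>x\<in>S. d x * iascol E L x u) = (\<Sum>x\<in>insert z B. d x * iascol E L x u)"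
      by (rule sum.mono_neutral_right[OF assms(5)]) (use assms in \<open>auto simp: d_def\<close>)
    also have "\<dots> = iascol E L z u + (\<Sum>x\<in>B. d x * iascol E L x u)"
      using fB assms(3) by (simp add: d_def)
    also have "(\<Sum>x\<in>B. d x * iascol E L x u) = (\<Sum>x\<in>B. c x * iascol E L x u)"
      by (rule sum.cong) (use assms(3) in \<open>auto simp: d_def\<close>)
    finally show "(\<Sum>x\<in>S. d x * iascol E L x u) = 0" using c u by simp
  qed
  then have "d z = 0" using ind assms(1) unfolding ias_indep_def by blast
  then show False by (simp add: d_def)
qed



lemma max_indep:
  assumes "finite V" "A \<subseteq> T" "T \<subseteq> W V" "ias_indep V E L A"
  shows "\<exists>B. A \<subseteq> B \<and> B \<subseteq> T \<and> ias_indep V E L B \<and> (\<forall>S. B \<subset> S \<longrightarrow> S \<subseteq> T \<longrightarrow> \<not> ias_indep V E L S)"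
proof -
  define F where "F = {B. A \<subseteq> B \<and> B \<subseteq> T \<and> ias_indep V E L B}"
  have fT: "finite T" using finite_subset[OF assms(3) finite_W[OF assms(1)]] .
  have "F \<subseteq> Pow T" unfolding F_def by blast
  then have fF: "finite F" using finite_subset finite_Pow_iff fT by blast
  have AF: "A \<in> F" unfolding F_def using assms(2,4) by blast
  obtain m where m: "m \<in> F" "\<forall>b\<in>F. m \<le> b \<longrightarrow> m = b"
    using finite_has_maximal2[OF fF AF] by blast
  have "\<forall>S. m \<subset> S \<longrightarrow> S \<subseteq> T \<longrightarrow> \<not> ias_indep V E L S"
  proof (intro allI impI notI)
    fix S assume "m \<subset> S" "S \<subseteq> T" "ias_indep V E L S"
    then have "S \<in> F" using m(1) unfolding F_def by blast
    then show False using m(2) \<open>m \<subset> S\<close> by blast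
  qed
  then show ?thesis using m(1) unfolding F_def by blast
qed

lemma inspan_phis:
  assumes "finite V"
  shows "inspan V E L ((\<lambda>w. (w, Phi)) ` V) f"
proof -
  have "\<forall>u\<in>V. f u = (\<Sum>x\<in>(\<lambda>w. (w, Phi)) ` V. (f (fst x)) * iascol E L x u)"
  proof
    fix u assume u: "u \<in> V"
    have "(\<Sum>x\<in>(\<lambda>w. (w, Phi)) ` V. (f (fst x)) * iascol E L x u)
        = (\<Sum>w\<in>V. f w * iascol E L (w, Phi) u)"
      by (subst sum.reindex) (auto simp: inj_on_def)
    also have "\<dots> = (\<Sum>w\<in>V. if w = u then f u else 0)"
      by (rule sum.cong) auto
    also have "\<dots> = f u" using u assms by (simp add: sum.delta')
    finally show "f u = (\<Sum>x\<in>(\<lambda>w. (w, Phi)) ` V. (f (fst x)) * iascol E L x u)" by simp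
  qed
  then show ?thesis unfolding inspan_def by (rule exI[where x="\<lambda>x. f (fst x)"])
qed

lemma basis_of_spanning:
  assumes "finite V" "ias_indep V E L B" "\<forall>v\<in>V. inspan V E L B (iascol E L (v, Phi))"
  shows "ias_basis V E L B"
proof -
  have BW: "B \<subseteq> W V" using assms(2) unfolding ias_indep_def by blast
  have fB: "finite B" using finite_subset[OF BW finite_W[OF assms(1)]] .
  have ph: "\<forall>t\<in>(\<lambda>w. (w, Phi)) ` V. inspan V E L B (iascol E L t)" using assms(3) by simp
  have sp: "inspan V E L B f" for f
    by (rule inspan_trans[OF ph inspan_phis[OF assms(1)] finite_imageI[OF assms(1)] fB])
  show ?thesis unfolding ias_basis_def
  proof (intro conjI allI impI)
    show "ias_indep V E L B" by fact
    fix S assume "B \<subset> S" "S \<subseteq> W V"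
    then obtain z where "z \<in> S" "z \<notin> B" by blast
    moreover have "finite S" using finite_subset[OF \<open>S \<subseteq> W V\<close> finite_W[OF assms(1)]] .
    ultimately show "\<not> ias_indep V E L S"
      using not_indep_span[of z S B V E L, OF _ _ _ sp] \<open>B \<subset> S\<close> by blast
  qed
qed

lemma basis_in_spanning:
  assumes "finite V" "T \<subseteq> W V" "\<forall>v\<in>V. inspan V E L T (iascol E L (v, Phi))"
  shows "\<exists>B. B \<subseteq> T \<and> ias_basis V E L B"
proof -
  have "ias_indep V E L {}" unfolding ias_indep_def by simp
  then obtain B where B: "B \<subseteq> T" "ias_indep V E L B"
    "\<forall>S. B \<subset> S \<longrightarrow> S \<subseteq> T \<longrightarrow> \<not> ias_indep V E L S"
    using max_indep[OF assms(1) empty_subsetI assms(2) \<open>ias_indep V E L {}\<close>] by blast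
  have fT: "finite T" using finite_subset[OF assms(2) finite_W[OF assms(1)]] .
  have fB: "finite B" using finite_subset[OF B(1) fT] .
  have "\<forall>t\<in>T. inspan V E L B (iascol E L t)"
  proof
    fix t assume t: "t \<in> T"
    show "inspan V E L B (iascol E L t)"
    proof (cases "t \<in> B")
      case True then show ?thesis using inspan_mem fB by blast
    next
      case False
      have "insert t B \<subseteq> T" using t B(1) by blast
      then have "\<not> ias_indep V E L (insert t B)" using B(3) False by blast
      moreover have "t \<in> W V" using t assms(2) by blast
      ultimately show ?thesis using indep_insert[OF B(2) _ _ fB False] by blast
    qed
  qed
  then have "\<forall>v\<in>V. inspan V E L B (iascol E L (v, Phi))"
    using inspan_trans[OF _ _ fT fB] assms(3) by blast
  then show ?thesis using basis_of_spanning[OF assms(1) B(2)] B(1) by blast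
qed



definition partner :: "('a \<Rightarrow> bool) \<Rightarrow> 'a \<Rightarrow> 'a \<times> blk" where
  "partner L w = (if L w then (w, Chi) else (w, Psi))"
definition other :: "('a \<Rightarrow> bool) \<Rightarrow> 'a \<Rightarrow> 'a \<times> blk" where
  "other L w = (if L w then (w, Psi) else (w, Chi))"

lemma partner_w: "iascol E L (partner L w) w = 1"
  by (simp add: partner_def adjm_def add_bit_eq_xor)
lemma other_w: "iascol E L (other L w) w = 0"
  by (simp add: other_def adjm_def add_bit_eq_xor)
lemma fst_partner[simp]: "fst (partner L w) = w" by (simp add: partner_def)
lemma fst_other[simp]: "fst (other L w) = w" by (simp add: other_def)
lemma snd_partner: "snd (partner L w) \<noteq> Phi" by (simp add: partner_def)
lemma partner_ne[simp]: "partner L w \<noteq> (w, Phi)" "(w, Phi) \<noteq> partner L w" by (simp_all add: partner_def)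
lemma other_ne[simp]: "other L w \<noteq> (w, Phi)" "(w, Phi) \<noteq> other L w" "other L w \<noteq> partner L w"
  by (simp_all add: partner_def other_def)
lemma tau_eq: "tau w = {(w, Phi), partner L w, other L w}"
  by (auto simp: tau_def partner_def other_def)

lemma iso_col_other:
  assumes "looped_simple_graph V E" "isolated V E v" "u \<in> V"
  shows "iascol E L (other L v) u = 0"
proof -
  have "u \<noteq> v \<Longrightarrow> \<not> E u v" using assms unfolding looped_simple_graph_def isolated_def by blast
  then show ?thesis by (auto simp: other_def adjm_def)
qed

lemma iso_col_partner:
  assumes "looped_simple_graph V E" "isolated V E v" "u \<in> V"
  shows "iascol E L (partner L v) u = iascol E L (v, Phi) u"
proof -
  have "u \<noteq> v \<Longrightarrow> \<not> E u v" using assms unfolding looped_simple_graph_def isolated_def by blast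
  then show ?thesis by (auto simp: partner_def adjm_def add_bit_eq_xor)
qed

lemma iso_col_far:
  assumes "looped_simple_graph V E" "isolated V E v" "w \<in> V" "w \<noteq> v"
  shows "iascol E L (w, k) v = 0"
proof -
  have "\<not> E v w" using assms unfolding looped_simple_graph_def isolated_def by blast
  then show ?thesis using assms(4) by (cases k) (auto simp: adjm_def)
qed

lemma singleton_indep:
  assumes "x \<in> W V" "u \<in> V" "iascol E L x u = 1"
  shows "ias_indep V E L {x}"
  using assms unfolding ias_indep_def by auto

lemma zero_col_loop:
  assumes "finite V" "x \<in> W V" "\<forall>u\<in>V. iascol E L x u = 0"
  shows "ias_loop V E L x"
  unfolding ias_loop_def
proof (intro conjI allI impI notI)
  show "x \<in> W V" by fact
  fix B assume B: "ias_basis V E L B" "x \<in> B"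
  then have ind: "ias_indep V E L B" unfolding ias_basis_def by blast
  then have "B \<subseteq> W V" unfolding ias_indep_def by blast
  then have fB: "finite B" using finite_subset finite_W[OF assms(1)] by blast
  have "\<forall>u\<in>V. (\<Sum>y\<in>B. (if y = x then 1 else 0) * iascol E L y u) = 0"
  proof
    fix u assume u: "u \<in> V"
    have "(\<Sum>y\<in>B. (if y = x then 1 else 0) * iascol E L y u) = (\<Sum>y\<in>B. if y = x then iascol E L x u else 0)"
      by (rule sum.cong) auto
    also have "\<dots> = iascol E L x u" using fB B(2) by (simp add: sum.delta)
    finally show "(\<Sum>y\<in>B. (if y = x then 1 else 0) * iascol E L y u) = 0" using assms(3) u by simp
  qed
  moreover have "\<forall>c. (\<forall>u\<in>V. (\<Sum>y\<in>B. c y * iascol E L y u) = 0) \<longrightarrow> (\<forall>y\<in>B. c y = 0)"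
    using ind unfolding ias_indep_def by blast
  ultimately have "\<forall>y\<in>B. (if y = x then 1 else (0::bit)) = 0"
    by (rule spec[where x="\<lambda>y. if y = x then 1 else (0::bit)", THEN mp, rotated])
  then show False using B(2) by force
qed

lemma nonzero_not_loop:
  assumes "finite V" "x \<in> W V" "u \<in> V" "iascol E L x u = 1"
  shows "\<not> ias_loop V E L x"
proof -
  have "{x} \<subseteq> W V" using assms by blast
  then obtain B where B: "{x} \<subseteq> B" "B \<subseteq> W V" "ias_indep V E L B"
    "\<forall>S. B \<subset> S \<longrightarrow> S \<subseteq> W V \<longrightarrow> \<not> ias_indep V E L S"
    using max_indep[OF assms(1) _ order_refl singleton_indep[OF assms(2-4)]] by blast
  then have "ias_basis V E L B" unfolding ias_basis_def by blast
  then show ?thesis using B(1) unfolding ias_loop_def by blast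
qed

lemma unit_span:
  assumes "finite V" "w \<in> V" "z \<in> T" "T \<subseteq> W V" "snd z \<noteq> Phi" "iascol E L z w = 1"
    "\<forall>u\<in>V-{w}. (u, Phi) \<in> T"
  shows "inspan V E L T (iascol E L (w, Phi))"
proof -
  let ?P = "(\<lambda>u. (u, Phi)) ` (V - {w})"
  have fP: "finite ?P" using assms(1) by simp
  have zP: "z \<notin> ?P" using assms(5) by auto
  have zz: "\<And>u. (u, Phi) \<noteq> z" using assms(5) by auto
  have "\<forall>r\<in>V. iascol E L (w, Phi) r = (\<Sum>x\<in>insert z ?P. (if x = z then 1 else iascol E L z (fst x)) * iascol E L x r)"
  proof
    fix r assume r: "r \<in> V"
    have "(\<Sum>x\<in>insert z ?P. (if x = z then 1 else iascol E L z (fst x)) * iascol E L x r)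
       = iascol E L z r + (\<Sum>x\<in>?P. (if x = z then 1 else iascol E L z (fst x)) * iascol E L x r)"
      using fP zP by simp
    also have "(\<Sum>x\<in>?P. (if x = z then 1 else iascol E L z (fst x)) * iascol E L x r)
        = (\<Sum>u\<in>V-{w}. iascol E L z u * iascol E L (u, Phi) r)"
      using zP by (subst sum.reindex) (auto simp: inj_on_def zz intro!: sum.cong)
    also have "\<dots> = (\<Sum>u\<in>V-{w}. if u = r then iascol E L z r else 0)"
      by (rule sum.cong) auto
    also have "\<dots> = (if r \<in> V - {w} then iascol E L z r else 0)"
      using assms(1) by (simp add: sum.delta')
    finally show "iascol E L (w, Phi) r = (\<Sum>x\<in>insert z ?P. (if x = z then 1 else iascol E L z (fst x)) * iascol E L x r)"
      using r assms(6) by auto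
  qed
  then have "inspan V E L (insert z ?P) (iascol E L (w, Phi))"
    unfolding inspan_def by (rule exI[where x="\<lambda>x. if x = z then 1 else iascol E L z (fst x)"])
  moreover have "insert z ?P \<subseteq> T" using assms(3,7) by blast
  moreover have "finite T" using finite_subset[OF assms(4) finite_W[OF assms(1)]] .
  ultimately show ?thesis by (rule inspan_mono)
qed



lemma W_mem[simp]: "(a, k) \<in> W V \<longleftrightarrow> a \<in> V" by (simp add: W_def)

lemma two_elems: "a \<in> {x, y} \<Longrightarrow> b \<in> {x, y} \<Longrightarrow> a \<noteq> b \<Longrightarrow> {x, y} = {a, b}"
  by auto

lemma spanning:
  assumes G: "looped_simple_graph V E" and xW: "x \<in> W V" and yW: "y \<in> W V"
    and H: "\<forall>w. isolated V E w \<longrightarrow> {x, y} \<noteq> {(w, Phi), partner L w}"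
  shows "\<forall>w\<in>V. inspan V E L (W V - {x, y}) (iascol E L (w, Phi))"
proof
  fix w assume w: "w \<in> V"
  define T where "T = W V - {x, y}"
  have fV: "finite V" using G unfolding looped_simple_graph_def by blast
  have TW: "T \<subseteq> W V" unfolding T_def by blast
  have fT: "finite T" using finite_subset[OF TW finite_W[OF fV]] .
  have "inspan V E L T (iascol E L (w, Phi))"
  proof (cases "(w, Phi) \<in> T")
    case True then show ?thesis using inspan_mem fT by blast
  next
    case nP: False
    then have wP: "(w, Phi) \<in> {x, y}" unfolding T_def using w by simp
    show ?thesis
    proof (cases "(w, Chi) \<in> T \<and> (w, Psi) \<in> T")
      case True
      have "\<forall>r\<in>V. iascol E L (w, Phi) r = (\<Sum>t\<in>{(w, Chi), (w, Psi)}. 1 * iascol E L t r)"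
        by (auto simp: adjm_def add_bit_eq_xor)
      then have "inspan V E L {(w, Chi), (w, Psi)} (iascol E L (w, Phi))"
        unfolding inspan_def by (rule exI[where x="\<lambda>_. 1"])
      then show ?thesis by (rule inspan_mono) (use True fT in auto)
    next
      case False
      then have cp: "(w, Chi) \<in> {x, y} \<or> (w, Psi) \<in> {x, y}" unfolding T_def using w by auto
      show ?thesis
      proof (cases "other L w \<in> {x, y}")
        case True
        then have xy: "{x, y} = {(w, Phi), other L w}" using two_elems[OF wP True] by simp
        have PT: "\<forall>u\<in>V-{w}. (u, Phi) \<in> T" unfolding T_def xy by (auto simp: other_def)
        have "partner L w \<in> T" unfolding T_def xy using w
          by (auto simp: partner_def other_def)
        then show ?thesis
          using unit_span[OF fV w _ TW snd_partner partner_w PT] by blast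
      next
        case False
        then have "partner L w \<in> {x, y}" using cp by (auto simp: partner_def other_def split: if_splits)
        then have xy: "{x, y} = {(w, Phi), partner L w}" using two_elems[OF wP] by simp
        then have "\<not> isolated V E w" using H by blast
        then obtain n where n: "n \<in> V" "n \<noteq> w" "E w n" using w unfolding isolated_def by blast
        have PT: "\<forall>u\<in>V-{w}. (u, Phi) \<in> T" unfolding T_def xy by (auto simp: partner_def)
        have "(n, Chi) \<in> T" unfolding T_def xy using n by (auto simp: partner_def)
        moreover have "iascol E L (n, Chi) w = 1" using n by (simp add: adjm_def)
        ultimately show ?thesis using unit_span[OF fV w _ TW _ _ PT, of "(n, Chi)"] by simp
      qed
    qed
  qed
  then show "inspan V E L (W V - {x, y}) (iascol E L (w, Phi))" unfolding T_def .
qed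

lemma basis_avoiding:
  assumes G: "looped_simple_graph V E" and xW: "x \<in> W V" and yW: "y \<in> W V"
    and H: "\<forall>w. isolated V E w \<longrightarrow> {x, y} \<noteq> {(w, Phi), partner L w}"
  shows "\<exists>B. ias_basis V E L B \<and> x \<notin> B \<and> y \<notin> B"
proof -
  have fV: "finite V" using G unfolding looped_simple_graph_def by blast
  obtain B where "B \<subseteq> W V - {x, y}" "ias_basis V E L B"
    using basis_in_spanning[OF fV _ spanning[OF G xW yW H]] by blast
  then show ?thesis by blast
qed

lemma no_coloop:
  assumes G: "looped_simple_graph V E" and xW: "x \<in> W V"
  shows "\<not> ias_coloop V E L x"
proof -
  have "\<forall>w. isolated V E w \<longrightarrow> {x, x} \<noteq> {(w, Phi), partner L w}"
    by (metis doubleton_eq_iff partner_ne(1))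
  then show ?thesis using basis_avoiding[OF G xW xW] unfolding ias_coloop_def by blast
qed

lemma nonloops_iso:
  assumes G: "looped_simple_graph V E" and iso: "isolated V E v"
  shows "{z \<in> tau v. \<not> ias_loop V E L z} = {(v, Phi), partner L v}"
proof -
  have fV: "finite V" using G unfolding looped_simple_graph_def by blast
  have v: "v \<in> V" using iso unfolding isolated_def by blast
  have "\<not> ias_loop V E L (v, Phi)"
    by (rule nonzero_not_loop[OF fV _ v]) (use v in auto)
  moreover have "\<not> ias_loop V E L (partner L v)"
    by (rule nonzero_not_loop[OF fV _ v partner_w]) (use v in \<open>auto simp: partner_def\<close>)
  moreover have "ias_loop V E L (other L v)"
    by (rule zero_col_loop[OF fV]) (use v iso_col_other[OF G iso] in \<open>auto simp: other_def\<close>)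
  ultimately show ?thesis unfolding tau_eq[of v L] by auto
qed

lemma iso_series:
  assumes G: "looped_simple_graph V E" and iso: "isolated V E v"
  shows "\<not> (\<exists>B. ias_basis V E L B \<and> (v, Phi) \<notin> B \<and> partner L v \<notin> B)"
proof
  assume "\<exists>B. ias_basis V E L B \<and> (v, Phi) \<notin> B \<and> partner L v \<notin> B"
  then obtain B where B: "ias_basis V E L B" "(v, Phi) \<notin> B" "partner L v \<notin> B" by blast
  have fV: "finite V" using G unfolding looped_simple_graph_def by blast
  have v: "v \<in> V" using iso unfolding isolated_def by blast
  have ind: "ias_indep V E L B" using B(1) unfolding ias_basis_def by blast
  have BW: "B \<subseteq> W V" using ind unfolding ias_indep_def by blast
  have fB: "finite B" using finite_subset[OF BW finite_W[OF fV]] .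
  have z: "iascol E L b v = 0" if b: "b \<in> B" for b
  proof -
    obtain w k where bwk: "b = (w, k)" by (cases b)
    have wV: "w \<in> V" using b BW bwk by auto
    show ?thesis
    proof (cases "w = v")
      case True
      have "b \<in> tau v" using True bwk by (cases k) (auto simp: tau_def)
      then have "b = other L v" using b B(2,3) unfolding tau_eq[of v L] by auto
      then show ?thesis using other_w by simp
    next
      case False
      then show ?thesis using iso_col_far[OF G iso wV] bwk by simp
    qed
  qed
  have "\<not> inspan V E L B (iascol E L (v, Phi))"
  proof
    assume "inspan V E L B (iascol E L (v, Phi))"
    then obtain c where c: "\<forall>u\<in>V. iascol E L (v, Phi) u = (\<Sum>x\<in>B. c x * iascol E L x u)"
      unfolding inspan_def by blast
    have "(\<Sum>x\<in>B. c x * iascol E L x v) = 0" using z by simp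
    moreover have "iascol E L (v, Phi) v = (\<Sum>x\<in>B. c x * iascol E L x v)" using c v by blast
    ultimately show False by simp
  qed
  then have "ias_indep V E L (insert (v, Phi) B)"
    using indep_insert[OF ind _ _ fB B(2)] v by simp
  moreover have "B \<subset> insert (v, Phi) B" using B(2) by blast
  moreover have "insert (v, Phi) B \<subseteq> W V" using BW v by simp
  ultimately show False using B(1) unfolding ias_basis_def by blast
qed

lemma iso_parallel:
  assumes G: "looped_simple_graph V E" and iso: "isolated V E v"
  shows "ias_parallel V E L (v, Phi) (partner L v)"
proof -
  have fV: "finite V" using G unfolding looped_simple_graph_def by blast
  have v: "v \<in> V" using iso unfolding isolated_def by blast
  have pW: "partner L v \<in> W V" using v by (simp add: partner_def)
  have pv: "iascol E L (v, Phi) v = 1" by simp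
  have nl: "\<not> ias_loop V E L (v, Phi)" "\<not> ias_loop V E L (partner L v)"
    using nonloops_iso[OF G iso, of L] unfolding tau_eq[of v L] by blast+
  have notind: "\<not> ias_indep V E L {(v, Phi), partner L v}"
  proof
    assume ind: "ias_indep V E L {(v, Phi), partner L v}"
    have "\<forall>u\<in>V. (\<Sum>x\<in>{(v, Phi), partner L v}. (1::bit) * iascol E L x u) = 0"
    proof
      fix u assume u: "u \<in> V"
      have "(\<Sum>x\<in>{(v, Phi), partner L v}. (1::bit) * iascol E L x u)
          = iascol E L (v, Phi) u + iascol E L (partner L v) u"
        by (simp add: partner_ne)
      then show "(\<Sum>x\<in>{(v, Phi), partner L v}. (1::bit) * iascol E L x u) = 0"
        using iso_col_partner[OF G iso u, of L] by simp
    qed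
    moreover have "\<forall>c. (\<forall>u\<in>V. (\<Sum>x\<in>{(v, Phi), partner L v}. c x * iascol E L x u) = 0) \<longrightarrow> (\<forall>x\<in>{(v, Phi), partner L v}. c x = 0)"
      using ind unfolding ias_indep_def by blast
    ultimately have "\<forall>x\<in>{(v, Phi), partner L v}. (1::bit) = 0"
      by (rule spec[where x="\<lambda>_. 1::bit", THEN mp, rotated])
    then have "(1::bit) = 0" by blast
    then show False by simp
  qed
  have sub: "ias_indep V E L D" if "D \<subset> {(v, Phi), partner L v}" for D
  proof -
    have "D = {} \<or> D = {(v, Phi)} \<or> D = {partner L v}" using that by auto
    then show ?thesis
    proof (elim disjE)
      assume "D = {}" then show ?thesis unfolding ias_indep_def by simp
    next
      assume "D = {(v, Phi)}" then show ?thesis using singleton_indep[of "(v, Phi)" V v E L] v by simp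
    next
      assume "D = {partner L v}" then show ?thesis using singleton_indep[OF pW v partner_w] by simp
    qed
  qed
  have "{(v, Phi), partner L v} \<subseteq> W V" using pW v by simp
  then show ?thesis unfolding ias_parallel_def ias_circuit_def
    using nl notind sub partner_ne(2)[of v L] by blast
qed

theorem proposition9p1:
  fixes V :: "'a set" and E :: "'a \<Rightarrow> 'a \<Rightarrow> bool" and L :: "'a \<Rightarrow> bool"
  assumes "looped_simple_graph V E"
  shows "(\<forall>x\<in>W V. \<not> ias_coloop V E L x) \<and>
         (\<forall>x\<in>W V. \<forall>y\<in>W V. x \<noteq> y \<longrightarrow>
            ((ias_series V E L x y \<longleftrightarrow>
               (\<exists>v. isolated V E v \<and> {x, y} = {z \<in> tau v. \<not> ias_loop V E L z}))
             \<and> (ias_series V E L x y \<longrightarrow> ias_parallel V E L x y)))"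
proof -
  note G = assms
  have A: "\<forall>x\<in>W V. \<not> ias_coloop V E L x" using no_coloop[OF G] by blast
  have fwd: "\<exists>v. isolated V E v \<and> {x, y} = {(v, Phi), partner L v}"
    if xy: "x \<in> W V" "y \<in> W V" and s: "ias_series V E L x y" for x y
  proof (rule ccontr)
    assume "\<not> ?thesis"
    then have "\<forall>w. isolated V E w \<longrightarrow> {x, y} \<noteq> {(w, Phi), partner L w}" by blast
    then show False using basis_avoiding[OF G xy] s A xy unfolding ias_series_def by blast
  qed
  have bwd: "ias_series V E L x y"
    if xy: "x \<in> W V" "y \<in> W V" and iso: "isolated V E v" and e: "{x, y} = {(v, Phi), partner L v}" for x y v
  proof -
    have "\<not> (\<exists>B. ias_basis V E L B \<and> x \<notin> B \<and> y \<notin> B)"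
      using iso_series[OF G iso, of L] e by (metis doubleton_eq_iff)
    then show ?thesis unfolding ias_series_def using A xy by blast
  qed
  have par: "ias_parallel V E L x y"
    if iso: "isolated V E v" and e: "{x, y} = {(v, Phi), partner L v}" for x y v
  proof -
    have "ias_parallel V E L (v, Phi) (partner L v)" by (rule iso_parallel[OF G iso])
    moreover have "ias_parallel V E L x y = ias_parallel V E L y x"
      unfolding ias_parallel_def by (auto simp: insert_commute)
    ultimately show ?thesis using e by (metis doubleton_eq_iff)
  qed
  show ?thesis
  proof (intro conjI A ballI impI)
    fix x y assume xy: "x \<in> W V" "y \<in> W V" "x \<noteq> y"
    show "ias_series V E L x y \<longleftrightarrow> (\<exists>v. isolated V E v \<and> {x, y} = {z \<in> tau v. \<not> ias_loop V E L z})"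
    proof
      assume "ias_series V E L x y"
      then obtain v where v: "isolated V E v" "{x, y} = {(v, Phi), partner L v}"
        using fwd[OF xy(1,2)] by blast
      then have "{x, y} = {z \<in> tau v. \<not> ias_loop V E L z}"
        using nonloops_iso[OF G v(1), of L] by simp
      then show "\<exists>v. isolated V E v \<and> {x, y} = {z \<in> tau v. \<not> ias_loop V E L z}"
        using v(1) by blast
    next
      assume "\<exists>v. isolated V E v \<and> {x, y} = {z \<in> tau v. \<not> ias_loop V E L z}"
      then obtain v where v: "isolated V E v" "{x, y} = {z \<in> tau v. \<not> ias_loop V E L z}"
        by blast
      then have "{x, y} = {(v, Phi), partner L v}"
        using nonloops_iso[OF G v(1), of L] by simp
      then show "ias_series V E L x y" using bwd[OF xy(1,2) v(1)] by blast
    qed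
    show "ias_series V E L x y \<Longrightarrow> ias_parallel V E L x y"
      using fwd[OF xy(1,2)] par by blast
  qed
qed

end
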